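(* If $\pi_0(\theta^* )>0$, then with probability 1, for every $x'\in\mathcal{X}$, $$\lim_{k\to\infty}\Big|\hat q_k(x';x_{k-1},u_{k-1})-q(x';\theta^*,x_{k-1},u_{k-1})\Big|=0,$$ where $\hat q_k(x';x,u):=\sum_{\theta\in\Theta}\pi_{k-1}(\theta)\,q(x';\theta,x,u)$ is the marginal (posterior-predictive) transition kernel. In particular $\lim_{k\to\infty}\hat q_k(x_k;x_{k-1},u_{k-1})-q(x_k;\theta^*,x_{k-1},u_{k-1})=0$ w.p.1.
   Context: System: $x_{k+1}=f(x_k,u_k,w_k,\theta)$, $x_k\in\mathcal{X}$, $u_k\in\mathcal{U}$, $w_k$ i.i.d. with a density. $\Theta=\{\theta_1,\theta_2,\dots\}$ is countably infinite; data are generated by the true parameter $\theta^*\in\Theta$; each $u_k$ is a measurable function of past observations. The transition density $q(x';\theta,x,u)$ of $x_{k+1}$ given $(x_k,u_k)=(x,u)$ is continuously differentiable, strictly positive, with bounded first derivative in $x'$. Posterior: $\pi_k(\theta)=q(x_k;\theta,x_{k-1},u_{k-1})\pi_{k-1}(\theta)/\sum_{\theta'}q(x_k;\theta',x_{k-1},u_{k-1})\pi_{k-1}(\theta')$, starting from a prior $\pi_0$. *)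

theory Defs
  imports "HOL-Probability.Probability"
begin

text \<open>Transition density convention: q th y x u is the density at y (= x') of x_{k+1}
  given (x_k,u_k) = (x,u) under parameter th.\<close>

fun posterior ::
  "('p \<Rightarrow> 'x \<Rightarrow> 'x \<Rightarrow> 'u \<Rightarrow> real) \<Rightarrow> 'p set \<Rightarrow> ('p \<Rightarrow> real)
    \<Rightarrow> (nat \<Rightarrow> 'x) \<Rightarrow> (nat \<Rightarrow> 'u) \<Rightarrow> nat \<Rightarrow> 'p \<Rightarrow> real" where
  "posterior q \<Theta> \<pi>0 xs us 0 = \<pi>0"
| "posterior q \<Theta> \<pi>0 xs us (Suc k) =
     (\<lambda>th. q th (xs (Suc k)) (xs k) (us k) * posterior q \<Theta> \<pi>0 xs us k th /
        (\<Sum>\<^sub>\<infinity>th'\<in>\<Theta>. q th' (xs (Suc k)) (xs k) (us k) * posterior q \<Theta> \<pi>0 xs us k th'))"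

definition qhat ::
  "('p \<Rightarrow> 'x \<Rightarrow> 'x \<Rightarrow> 'u \<Rightarrow> real) \<Rightarrow> 'p set \<Rightarrow> ('p \<Rightarrow> real)
    \<Rightarrow> (nat \<Rightarrow> 'x) \<Rightarrow> (nat \<Rightarrow> 'u) \<Rightarrow> nat \<Rightarrow> 'x \<Rightarrow> 'x \<Rightarrow> 'u \<Rightarrow> real" where
  "qhat q \<Theta> \<pi>0 xs us k y x u =
     (\<Sum>\<^sub>\<infinity>th\<in>\<Theta>. posterior q \<Theta> \<pi>0 xs us (k - 1) th * q th y x u)"

definition hist :: "(nat \<Rightarrow> 'a \<Rightarrow> 'x) \<Rightarrow> nat \<Rightarrow> 'a \<Rightarrow> (nat \<Rightarrow> 'x)" where
  "hist X k \<omega> = (\<lambda>i\<in>{..k}. X i \<omega>)"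

end

theory Submission
  imports Defs
begin


lemma ball_content_eq:
  fixes c :: "'x::euclidean_space"
  assumes "r \<ge> 0"
  shows "emeasure lborel (ball c r) = ennreal (measure lborel (ball (0::'x) r))"
  using emeasure_lborel_ball_finite[of c r] content_ball_conv_unit_ball[OF assms, of c]
    content_ball_conv_unit_ball[OF assms, of "0::'x"]
  by (simp add: emeasure_eq_ennreal_measure)

lemma nn_integral_ball_lower:
  fixes f :: "'x::euclidean_space \<Rightarrow> ennreal"
  assumes "r \<ge> 0" and "\<And>y. y \<in> ball c r \<Longrightarrow> a \<le> f y"
  shows "a * ennreal (measure lborel (ball (0::'x) r)) \<le> (\<integral>\<^sup>+ y. f y \<partial>lborel)"
proof -
  have "a * ennreal (measure lborel (ball (0::'x) r)) = (\<integral>\<^sup>+ y. a * indicator (ball c r) y \<partial>lborel)"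
    using ball_content_eq[OF assms(1), of c] by (simp add: nn_integral_cmult_indicator)
  also have "\<dots> \<le> (\<integral>\<^sup>+ y. f y \<partial>lborel)"
    by (intro nn_integral_mono) (auto simp: indicator_def assms(2))
  finally show ?thesis .
qed

lemma density_bound:
  fixes f :: "'x::euclidean_space \<Rightarrow> real"
  assumes nn: "\<And>y. f y \<ge> 0" and L: "L \<ge> 0"
    and lip: "\<And>y z. \<bar>f y - f z\<bar> \<le> L * dist y z"
    and int: "(\<integral>\<^sup>+ y. ennreal (f y) \<partial>lborel) = 1"
  shows "f y0 \<le> max (2 * L) (2 / measure lborel (ball (0::'x) 1))"
proof (rule ccontr)
  assume "\<not> ?thesis"
  hence m1: "f y0 > 2 * L" and m2: "f y0 > 2 / measure lborel (ball (0::'x) 1)" by auto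
  have cpos: "measure lborel (ball (0::'x) 1) > 0" by (rule content_ball_pos) simp
  have "ennreal (f y0 / 2) * ennreal (measure lborel (ball (0::'x) 1)) \<le> (\<integral>\<^sup>+ y. ennreal (f y) \<partial>lborel)"
  proof (rule nn_integral_ball_lower[of 1 y0])
    fix y assume "y \<in> ball y0 1"
    hence "dist y0 y < 1" by simp
    hence "L * dist y0 y \<le> L" using L by (simp add: mult_left_le)
    with lip[of y0 y] m1 have "f y0 / 2 \<le> f y" by linarith
    thus "ennreal (f y0 / 2) \<le> ennreal (f y)" by (rule ennreal_leI)
  qed simp
  moreover have "ennreal (f y0 / 2 * measure lborel (ball (0::'x) 1)) = ennreal (f y0 / 2) * ennreal (measure lborel (ball (0::'x) 1))"
    using m1 L by (intro ennreal_mult) auto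
  ultimately have "ennreal (f y0 / 2 * measure lborel (ball (0::'x) 1)) \<le> 1"
    using int by simp
  hence "f y0 / 2 * measure lborel (ball (0::'x) 1) \<le> 1" by (simp only: ennreal_le_1)
  moreover have "f y0 * measure lborel (ball (0::'x) 1) > 2" using m2 cpos by (simp add: field_simps)
  ultimately show False by simp
qed

lemma sqrt_diff_lower:
  fixes a b C e :: real
  assumes "0 \<le> a" "a \<le> C" "0 \<le> b" "b \<le> C" "e > 0" "\<bar>a - b\<bar> \<ge> e"
  shows "e\<^sup>2 / (4 * C) \<le> (sqrt a - sqrt b)\<^sup>2"
proof -
  have C: "C > 0" using assms by linarith
  have eq: "\<bar>a - b\<bar> = \<bar>sqrt a - sqrt b\<bar> * (sqrt a + sqrt b)"
  proof -
    have "a - b = (sqrt a - sqrt b) * (sqrt a + sqrt b)"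
      using assms by (simp add: algebra_simps power2_eq_square[symmetric])
    moreover have "sqrt a + sqrt b \<ge> 0" using assms by simp
    ultimately show ?thesis by (simp add: abs_mult)
  qed
  have "sqrt a \<le> sqrt C" "sqrt b \<le> sqrt C" using assms by simp_all
  hence s: "sqrt a + sqrt b \<le> 2 * sqrt C" by linarith
  have "e \<le> \<bar>sqrt a - sqrt b\<bar> * (2 * sqrt C)"
    using assms(6) eq s by (metis abs_ge_zero dual_order.trans mult_left_mono)
  hence "e\<^sup>2 \<le> (\<bar>sqrt a - sqrt b\<bar> * (2 * sqrt C))\<^sup>2"
    using assms(5) by (intro power_mono) auto
  also have "\<dots> = (sqrt a - sqrt b)\<^sup>2 * (4 * C)" using C
    by (simp add: power_mult_distrib)
  finally show ?thesis using C by (simp add: field_simps)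
qed

lemma separation:
  fixes f g :: "'x::euclidean_space \<Rightarrow> real"
  assumes f: "\<And>y. 0 \<le> f y" "\<And>y. f y \<le> C" and g: "\<And>y. 0 \<le> g y" "\<And>y. g y \<le> C"
    and L: "L > 0" and lf: "\<And>y z. \<bar>f y - f z\<bar> \<le> L * dist y z"
    and lg: "\<And>y z. \<bar>g y - g z\<bar> \<le> L * dist y z"
    and e: "e > 0" and y0: "\<bar>f y0 - g y0\<bar> \<ge> e"
  shows "ennreal ((e/2)\<^sup>2 / (4 * C) * measure lborel (ball (0::'x) (e / (4 * L))))
     \<le> (\<integral>\<^sup>+ y. ennreal ((sqrt (f y) - sqrt (g y))\<^sup>2) \<partial>lborel)"
proof -
  have "ennreal ((e/2)\<^sup>2 / (4 * C)) * ennreal (measure lborel (ball (0::'x) (e / (4 * L))))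
      \<le> (\<integral>\<^sup>+ y. ennreal ((sqrt (f y) - sqrt (g y))\<^sup>2) \<partial>lborel)"
  proof (rule nn_integral_ball_lower[of _ y0])
    show "0 \<le> e / (4 * L)" using e L by simp
    fix y assume "y \<in> ball y0 (e / (4 * L))"
    hence d: "dist y0 y \<le> e / (4 * L)" by simp
    have "L * dist y0 y \<le> e / 4" using mult_left_mono[OF d, of L] L by simp
    hence "\<bar>f y - g y\<bar> \<ge> e / 2" using lf[of y0 y] lg[of y0 y] y0 by linarith
    hence "(e/2)\<^sup>2 / (4 * C) \<le> (sqrt (f y) - sqrt (g y))\<^sup>2"
      using e by (intro sqrt_diff_lower) (auto intro: f g)
    thus "ennreal ((e/2)\<^sup>2 / (4 * C)) \<le> ennreal ((sqrt (f y) - sqrt (g y))\<^sup>2)"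
      by (rule ennreal_leI)
  qed
  moreover have "C \<ge> 0" using f(1)[of y0] f(2)[of y0] by linarith
  hence "ennreal ((e/2)\<^sup>2 / (4 * C) * measure lborel (ball (0::'x) (e / (4 * L)))) = ennreal ((e/2)\<^sup>2 / (4 * C)) * ennreal (measure lborel (ball (0::'x) (e / (4 * L))))"
    by (intro ennreal_mult) auto
  ultimately show ?thesis by simp
qed




locale bayes =
  fixes q :: "'p \<Rightarrow> 'x::euclidean_space \<Rightarrow> 'x \<Rightarrow> 'u \<Rightarrow> real"
    and \<Theta> :: "'p set" and \<pi>0 :: "'p \<Rightarrow> real" and \<theta>s :: 'p and C L :: real
  assumes cnt: "countable \<Theta>" and inf: "infinite \<Theta>" and ts: "\<theta>s \<in> \<Theta>"
    and qpos: "\<And>th y x u. th \<in> \<Theta> \<Longrightarrow> q th y x u > 0"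
    and qbdd: "\<And>th y x u. th \<in> \<Theta> \<Longrightarrow> q th y x u \<le> C"
    and Lpos: "L > 0"
    and qlip: "\<And>th y z x u. th \<in> \<Theta> \<Longrightarrow> \<bar>q th y x u - q th z x u\<bar> \<le> L * dist y z"
    and qint: "\<And>th x u. th \<in> \<Theta> \<Longrightarrow> (\<integral>\<^sup>+ y. ennreal (q th y x u) \<partial>lborel) = 1"
    and pnn: "\<And>th. th \<in> \<Theta> \<Longrightarrow> \<pi>0 th \<ge> 0"
    and psum: "(\<pi>0 has_sum 1) \<Theta>"
    and ptrue: "\<pi>0 \<theta>s > 0"
begin

definition "goodp p \<longleftrightarrow> (\<forall>th\<in>\<Theta>. p th \<ge> 0) \<and> (p has_sum 1) \<Theta> \<and> p \<theta>s > 0"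

definition mix :: "('p \<Rightarrow> real) \<Rightarrow> 'x \<Rightarrow> 'x \<Rightarrow> 'u \<Rightarrow> real" where
  "mix p y x u = (\<Sum>\<^sub>\<infinity>th\<in>\<Theta>. p th * q th y x u)"

lemma Cpos: "C > 0" using qpos[OF ts] qbdd[OF ts] by (meson less_le_trans)

lemma pq_nonneg: "goodp p \<Longrightarrow> th \<in> \<Theta> \<Longrightarrow> 0 \<le> p th * q th y x u"
  using qpos[of th y x u] unfolding goodp_def by (meson less_imp_le mult_nonneg_nonneg)

lemma mix_summable:
  assumes "goodp p"
  shows "(\<lambda>th. p th * q th y x u) summable_on \<Theta>"
proof (rule summable_on_comparison_test)
  show "(\<lambda>th. p th * C) summable_on \<Theta>"
    using assms unfolding goodp_def by (intro summable_on_cmult_left) (auto simp: summable_on_def)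
  fix th assume "th \<in> \<Theta>"
  show "0 \<le> p th * q th y x u" using pq_nonneg[OF assms \<open>th \<in> \<Theta>\<close>] .
  show "p th * q th y x u \<le> p th * C"
    using assms qbdd[of th] \<open>th \<in> \<Theta>\<close> unfolding goodp_def
      by (auto intro: mult_left_mono)
qed

lemma mix_bounds:
  assumes "goodp p"
  shows "p \<theta>s * q \<theta>s y x u \<le> mix p y x u" "mix p y x u \<le> C" "0 < mix p y x u"
proof -
  have hs: "((\<lambda>th. p th * q th y x u) has_sum mix p y x u) \<Theta>"
    unfolding mix_def using mix_summable[OF assms] by simp
  show 1: "p \<theta>s * q \<theta>s y x u \<le> mix p y x u"
    by (rule has_sum_mono2[OF _ hs, of "{\<theta>s}"])
      (use ts assms qpos in \<open>auto simp: goodp_def less_imp_le intro!: has_sum_finiteI mult_nonneg_nonneg\<close>)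
  have "((\<lambda>th. p th * C) has_sum (1 * C)) \<Theta>"
    using assms unfolding goodp_def by (intro has_sum_cmult_left) auto
  thus "mix p y x u \<le> C"
    by (intro has_sum_mono[OF hs]) (use assms qbdd in \<open>auto simp: goodp_def intro: mult_left_mono\<close>)
  show "0 < mix p y x u"
    using 1 assms qpos[OF ts, of y x u] unfolding goodp_def
    by (meson less_le_trans mult_pos_pos)
qed

lemma mix_nonneg: "goodp p \<Longrightarrow> 0 \<le> mix p y x u"
  using mix_bounds(3) less_imp_le by blast

lemma mix_lip1:
  assumes "goodp p"
  shows "mix p y x u \<le> mix p z x u + L * dist y z"
proof -
  have "mix p y x u \<le> (\<Sum>\<^sub>\<infinity>th\<in>\<Theta>. p th * q th z x u + p th * (L * dist y z))"
    unfolding mix_def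
  proof (rule infsum_mono)
    show "(\<lambda>th. p th * q th y x u) summable_on \<Theta>" by (rule mix_summable[OF assms])
    show "(\<lambda>th. p th * q th z x u + p th * (L * dist y z)) summable_on \<Theta>"
      using mix_summable[OF assms] assms unfolding goodp_def
      by (intro summable_on_add summable_on_cmult_left) (auto simp: summable_on_def)
    fix th assume th: "th \<in> \<Theta>"
    have "q th y x u \<le> q th z x u + L * dist y z" using qlip[OF th, of y x u z] by linarith
    thus "p th * q th y x u \<le> p th * q th z x u + p th * (L * dist y z)"
      using assms th unfolding goodp_def by (metis distrib_left mult_left_mono)
  qed
  also have "\<dots> = mix p z x u + 1 * (L * dist y z)"
  proof -
    have h1: "((\<lambda>th. p th * (L * dist y z)) has_sum (1 * (L * dist y z))) \<Theta>"
      using assms unfolding goodp_def by (intro has_sum_cmult_left) auto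
    have h2: "((\<lambda>th. p th * q th z x u) has_sum mix p z x u) \<Theta>"
      unfolding mix_def using mix_summable[OF assms] by simp
    show ?thesis using has_sum_add[OF h2 h1] by (simp add: infsumI)
  qed
  finally show ?thesis by simp
qed

lemma mix_lip:
  assumes "goodp p"
  shows "\<bar>mix p y x u - mix p z x u\<bar> \<le> L * dist y z"
  using mix_lip1[OF assms, of y x u z] mix_lip1[OF assms, of z x u y] by (simp add: dist_commute)

lemma post_step:
  assumes "goodp p"
  shows "goodp (\<lambda>th. q th y x u * p th / (\<Sum>\<^sub>\<infinity>th'\<in>\<Theta>. q th' y x u * p th'))"
proof -
  have eq: "(\<Sum>\<^sub>\<infinity>th'\<in>\<Theta>. q th' y x u * p th') = mix p y x u"
    unfolding mix_def by (simp add: mult.commute)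
  have hs: "((\<lambda>th. p th * q th y x u) has_sum mix p y x u) \<Theta>"
    unfolding mix_def using mix_summable[OF assms] by simp
  have pos: "mix p y x u > 0" by (rule mix_bounds(3)[OF assms])
  have "((\<lambda>th. p th * q th y x u * (1 / mix p y x u)) has_sum (mix p y x u * (1 / mix p y x u))) \<Theta>"
    by (rule has_sum_cmult_left[OF hs])
  hence "((\<lambda>th. q th y x u * p th / mix p y x u) has_sum 1) \<Theta>"
    using pos by (simp add: mult.commute)
  moreover have "\<forall>th\<in>\<Theta>. 0 \<le> q th y x u * p th / mix p y x u"
  proof
    fix th assume th: "th \<in> \<Theta>"
    have "0 \<le> q th y x u" using qpos[OF th] by (rule less_imp_le)
    moreover have "0 \<le> p th" using assms th unfolding goodp_def by auto
    ultimately show "0 \<le> q th y x u * p th / mix p y x u" using pos by simp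
  qed
  moreover have "0 < q \<theta>s y x u * p \<theta>s / mix p y x u"
    using qpos[OF ts] assms pos unfolding goodp_def by simp
  ultimately show ?thesis unfolding eq goodp_def by auto
qed

lemma post_good: "goodp (posterior q \<Theta> \<pi>0 xs us n)"
proof (induction n)
  case 0 show ?case using pnn psum ptrue by (simp add: goodp_def)
next
  case (Suc n) show ?case using post_step[OF Suc] by simp
qed

lemma qhat_mix: "qhat q \<Theta> \<pi>0 xs us (Suc k) y x u = mix (posterior q \<Theta> \<pi>0 xs us k) y x u"
  by (simp add: qhat_def mix_def)

lemma post_Suc: "posterior q \<Theta> \<pi>0 xs us (Suc k) th =
   q th (xs (Suc k)) (xs k) (us k) * posterior q \<Theta> \<pi>0 xs us k th / mix (posterior q \<Theta> \<pi>0 xs us k) (xs (Suc k)) (xs k) (us k)"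
  by (simp add: mix_def mult.commute)

lemma post_le1:
  fixes p :: "'p \<Rightarrow> real"
  assumes "goodp p" "th \<in> \<Theta>" shows "p th \<le> 1"
proof -
  have h1: "(p has_sum p th) {th}" by (rule has_sum_finiteI) auto
  have h2: "(p has_sum 1) \<Theta>" using assms unfolding goodp_def by auto
  show ?thesis
    by (rule has_sum_mono2[OF h1 h2]) (use assms in \<open>auto simp: goodp_def\<close>)
qed

lemma post_cong:
  "(\<And>i. i \<le> n \<Longrightarrow> xs i = xs' i) \<Longrightarrow> (\<And>i. i < n \<Longrightarrow> us i = us' i) \<Longrightarrow>
   posterior q \<Theta> \<pi>0 xs us n = posterior q \<Theta> \<pi>0 xs' us' n"
proof (induction n)
  case 0 thus ?case by simp
next
  case (Suc n)
  have "posterior q \<Theta> \<pi>0 xs us n = posterior q \<Theta> \<pi>0 xs' us' n" using Suc by auto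
  thus ?case using Suc.prems by simp
qed

lemma reindex_ennreal:
  assumes "\<And>th. th \<in> \<Theta> \<Longrightarrow> f th \<ge> 0" "f summable_on \<Theta>"
  shows "ennreal (infsum f \<Theta>) = (\<Sum>n. ennreal (f (from_nat_into \<Theta> n)))"
proof -
  have b: "bij_betw (from_nat_into \<Theta>) UNIV \<Theta>" using bij_betw_from_nat_into[OF cnt inf] .
  have "((\<lambda>n. f (from_nat_into \<Theta> n)) has_sum infsum f \<Theta>) UNIV"
    using has_sum_reindex_bij_betw[OF b, of f] has_sum_infsum[OF assms(2)] by simp
  hence "(\<lambda>n. f (from_nat_into \<Theta> n)) sums infsum f \<Theta>" by (rule has_sum_imp_sums)
  moreover have "\<And>n. f (from_nat_into \<Theta> n) \<ge> 0"
    using assms(1) b by (simp add: bij_betwE)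
  ultimately show ?thesis by (simp add: suminf_ennreal_eq sums_unique[symmetric])
qed

lemma q_meas_y: "th \<in> \<Theta> \<Longrightarrow> (\<lambda>y. q th y x u) \<in> borel_measurable borel"
proof -
  assume th: "th \<in> \<Theta>"
  have "continuous_on UNIV (\<lambda>y. q th y x u)"
  proof (rule continuous_on_iff[THEN iffD2], intro ballI allI impI)
    fix y and e :: real assume "0 < e"
    show "\<exists>d>0. \<forall>z\<in>UNIV. dist z y < d \<longrightarrow> dist (q th z x u) (q th y x u) < e"
    proof (intro exI[of _ "e / L"] conjI ballI impI)
      show "e / L > 0" using \<open>0 < e\<close> Lpos by simp
      fix z assume "dist z y < e / L"
      hence "L * dist z y < e" using Lpos by (simp add: field_simps)
      thus "dist (q th z x u) (q th y x u) < e" using qlip[OF th, of z x u y] by (simp add: dist_real_def)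
    qed
  qed
  thus ?thesis by (rule borel_measurable_continuous_onI)
qed

lemma mix_int:
  assumes "goodp p"
  shows "(\<integral>\<^sup>+ y. ennreal (mix p y x u) \<partial>lborel) = 1"
proof -
  let ?e = "from_nat_into \<Theta>"
  have b: "bij_betw ?e UNIV \<Theta>" using bij_betw_from_nat_into[OF cnt inf] .
  have en: "?e n \<in> \<Theta>" for n using b by (simp add: bij_betwE)
  have pn: "p th \<ge> 0" if "th \<in> \<Theta>" for th using assms that by (simp add: goodp_def)
  have "(\<integral>\<^sup>+ y. ennreal (mix p y x u) \<partial>lborel) = (\<integral>\<^sup>+ y. (\<Sum>n. ennreal (p (?e n) * q (?e n) y x u)) \<partial>lborel)"
    unfolding mix_def
    by (intro nn_integral_cong reindex_ennreal mix_summable[OF assms])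
      (use pq_nonneg[OF assms] in auto)
  also have "\<dots> = (\<Sum>n. \<integral>\<^sup>+ y. ennreal (p (?e n) * q (?e n) y x u) \<partial>lborel)"
    by (rule nn_integral_suminf) (use en q_meas_y in \<open>auto\<close>)
  also have "\<dots> = (\<Sum>n. ennreal (p (?e n)) * 1)"
  proof (rule suminf_cong)
    fix n
    have "(\<integral>\<^sup>+ y. ennreal (p (?e n) * q (?e n) y x u) \<partial>lborel) = (\<integral>\<^sup>+ y. ennreal (p (?e n)) * ennreal (q (?e n) y x u) \<partial>lborel)"
      using pn[OF en[of n]] qpos[OF en[of n]] by (intro nn_integral_cong) (simp add: ennreal_mult less_imp_le)
    also have "\<dots> = ennreal (p (?e n)) * (\<integral>\<^sup>+ y. ennreal (q (?e n) y x u) \<partial>lborel)"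
      by (rule nn_integral_cmult) (use en q_meas_y in auto)
    finally show "(\<integral>\<^sup>+ y. ennreal (p (?e n) * q (?e n) y x u) \<partial>lborel) = ennreal (p (?e n)) * 1"
      using qint[OF en[of n]] by simp
  qed
  also have "\<dots> = ennreal (infsum p \<Theta>)"
  proof -
    have "p summable_on \<Theta>" using assms unfolding goodp_def summable_on_def by blast
    thus ?thesis using reindex_ennreal[of p] pn by simp
  qed
  also have "infsum p \<Theta> = 1" using assms unfolding goodp_def by (simp add: infsumI)
  finally show ?thesis by simp
qed

end



locale model = bayes q \<Theta> \<pi>0 \<theta>s C L
  for q :: "'p \<Rightarrow> 'x::euclidean_space \<Rightarrow> 'x \<Rightarrow> 'u \<Rightarrow> real" and \<Theta> \<pi>0 \<theta>s C L +
  fixes M :: "'a measure" and N :: "'u measure" and X :: "nat \<Rightarrow> 'a \<Rightarrow> 'x"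
    and U :: "nat \<Rightarrow> 'a \<Rightarrow> 'u" and pol :: "nat \<Rightarrow> (nat \<Rightarrow> 'x) \<Rightarrow> 'u"
  assumes M: "prob_space M"
    and X_meas: "\<And>k. X k \<in> borel_measurable M"
    and pol_meas: "\<And>k. pol k \<in> measurable (PiM {..k} (\<lambda>_. borel)) N"
    and U_def: "\<And>k \<omega>. \<omega> \<in> space M \<Longrightarrow> U k \<omega> = pol k (hist X k \<omega>)"
    and q_meas: "\<And>th. th \<in> \<Theta> \<Longrightarrow>
          (\<lambda>(y, x, u). q th y x u) \<in> borel_measurable (borel \<Otimes>\<^sub>M borel \<Otimes>\<^sub>M N)"
    and transition: "\<And>k B A. B \<in> sets (PiM {..k} (\<lambda>_. borel)) \<Longrightarrow> A \<in> sets borel \<Longrightarrow>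
          emeasure M {\<omega> \<in> space M. hist X k \<omega> \<in> B \<and> X (Suc k) \<omega> \<in> A} =
          (\<integral>\<^sup>+ \<omega>. indicator {\<omega> \<in> space M. hist X k \<omega> \<in> B} \<omega> *
              (\<integral>\<^sup>+ y. indicator A y * ennreal (q \<theta>s y (X k \<omega>) (U k \<omega>)) \<partial>lborel) \<partial>M)"
begin

abbreviation "P k \<equiv> (PiM {..k} (\<lambda>_. borel) :: (nat \<Rightarrow> 'x) measure)"

lemma hist_meas: "hist X k \<in> measurable M (P k)"
  unfolding hist_def by (intro measurable_restrict X_meas)

lemma U_meas: "U k \<in> measurable M N"
proof -
  have "(\<lambda>\<omega>. pol k (hist X k \<omega>)) \<in> measurable M N"
    using measurable_comp[OF hist_meas pol_meas] by (simp add: comp_def)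
  thus ?thesis using U_def by (subst measurable_cong) auto
qed

lemma qs_meas: "(\<lambda>(\<omega>, y). ennreal (q \<theta>s y (X k \<omega>) (U k \<omega>))) \<in> borel_measurable (M \<Otimes>\<^sub>M lborel)"
proof -
  have m: "(\<lambda>(\<omega>, y). (y, X k \<omega>, U k \<omega>)) \<in> measurable (M \<Otimes>\<^sub>M lborel) (borel \<Otimes>\<^sub>M borel \<Otimes>\<^sub>M N)"
    using X_meas U_meas by measurable
  have "(\<lambda>z. (\<lambda>(y, x, u). q \<theta>s y x u) ((\<lambda>(\<omega>, y). (y, X k \<omega>, U k \<omega>)) z)) \<in> borel_measurable (M \<Otimes>\<^sub>M lborel)"
    using measurable_comp[OF m q_meas[OF ts]] by (simp add: comp_def)
  hence "(\<lambda>(\<omega>, y). q \<theta>s y (X k \<omega>) (U k \<omega>)) \<in> borel_measurable (M \<Otimes>\<^sub>M lborel)"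
    by (simp add: case_prod_beta)
  thus ?thesis by measurable
qed


lemma trans_ext:
  assumes G: "G \<in> borel_measurable (P k \<Otimes>\<^sub>M borel)"
  shows "(\<integral>\<^sup>+ \<omega>. G (hist X k \<omega>, X (Suc k) \<omega>) \<partial>M) =
         (\<integral>\<^sup>+ \<omega>. \<integral>\<^sup>+ y. G (hist X k \<omega>, y) * ennreal (q \<theta>s y (X k \<omega>) (U k \<omega>)) \<partial>lborel \<partial>M)"
proof -
  interpret prob_space M by (rule M)
  let ?H = "\<lambda>\<omega>. (hist X k \<omega>, X (Suc k) \<omega>)"
  let ?D = "density (M \<Otimes>\<^sub>M lborel) (\<lambda>(\<omega>, y). ennreal (q \<theta>s y (X k \<omega>) (U k \<omega>)))"
  let ?J = "\<lambda>(\<omega>::'a, y::'x). (hist X k \<omega>, y)"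
  have Hm: "?H \<in> measurable M (P k \<Otimes>\<^sub>M borel)"
    using hist_meas X_meas by measurable
  have Jm: "?J \<in> measurable (M \<Otimes>\<^sub>M lborel) (P k \<Otimes>\<^sub>M borel)"
    using hist_meas by measurable
  have Jm': "?J \<in> measurable ?D (P k \<Otimes>\<^sub>M borel)"
    using Jm by simp
  let ?E = "{a \<times> b | a b. a \<in> sets (P k) \<and> b \<in> sets (borel :: 'x measure)}"
  have eq: "distr M (P k \<Otimes>\<^sub>M borel) ?H = distr ?D (P k \<Otimes>\<^sub>M borel) ?J"
  proof (rule measure_eqI_generator_eq[OF Int_stable_pair_measure_generator[of "P k" borel]])
    show "?E \<subseteq> Pow (space (P k) \<times> space borel)" by (rule pair_measure_closed)
    show "sets (distr M (P k \<Otimes>\<^sub>M borel) ?H) = sigma_sets (space (P k) \<times> space borel) ?E"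
      by (simp add: sets_pair_measure)
    show "sets (distr ?D (P k \<Otimes>\<^sub>M borel) ?J) = sigma_sets (space (P k) \<times> space borel) ?E"
      by (simp add: sets_pair_measure)
    show "range (\<lambda>_. space (P k) \<times> space borel) \<subseteq> ?E"
    proof -
      have "space (P k) \<times> space borel \<in> ?E" using sets.top[of "P k"] sets.top[of borel] by blast
      thus ?thesis by blast
    qed
    show "(\<Union>i. space (P k) \<times> space borel) = space (P k) \<times> space borel" by simp
    show "emeasure (distr M (P k \<Otimes>\<^sub>M borel) ?H) (space (P k) \<times> space borel) \<noteq> \<infinity>"
      by (simp add: emeasure_distr[OF Hm] space_pair_measure)
  next
    fix Z assume "Z \<in> ?E"
    then obtain B A where Z: "Z = B \<times> A" and B: "B \<in> sets (P k)" and A: "A \<in> sets (borel :: 'x measure)" by auto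
    have ZS: "Z \<in> sets (P k \<Otimes>\<^sub>M borel)" using Z A B by auto
    have "emeasure (distr M (P k \<Otimes>\<^sub>M borel) ?H) Z = emeasure M (?H -` Z \<inter> space M)"
      by (rule emeasure_distr[OF Hm ZS])
    also have "?H -` Z \<inter> space M = {\<omega> \<in> space M. hist X k \<omega> \<in> B \<and> X (Suc k) \<omega> \<in> A}"
      using Z by auto
    also have "emeasure M \<dots> = (\<integral>\<^sup>+ \<omega>. indicator {\<omega> \<in> space M. hist X k \<omega> \<in> B} \<omega> *
              (\<integral>\<^sup>+ y. indicator A y * ennreal (q \<theta>s y (X k \<omega>) (U k \<omega>)) \<partial>lborel) \<partial>M)"
      by (rule transition[OF B A])
    also have "\<dots> = (\<integral>\<^sup>+ \<omega>. \<integral>\<^sup>+ y. ennreal (q \<theta>s y (X k \<omega>) (U k \<omega>)) * indicator (?J -` Z \<inter> space (M \<Otimes>\<^sub>M lborel)) (\<omega>, y) \<partial>lborel \<partial>M)"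
    proof (rule nn_integral_cong)
      fix \<omega> assume w: "\<omega> \<in> space M"
      have "indicator {\<omega> \<in> space M. hist X k \<omega> \<in> B} \<omega> *
              (\<integral>\<^sup>+ y. indicator A y * ennreal (q \<theta>s y (X k \<omega>) (U k \<omega>)) \<partial>lborel)
          = (\<integral>\<^sup>+ y. indicator {\<omega> \<in> space M. hist X k \<omega> \<in> B} \<omega> * (indicator A y * ennreal (q \<theta>s y (X k \<omega>) (U k \<omega>))) \<partial>lborel)"
        by (rule nn_integral_cmult[symmetric]) (use X_meas U_meas w A q_meas_y ts in \<open>auto\<close>)
      also have "\<dots> = (\<integral>\<^sup>+ y. ennreal (q \<theta>s y (X k \<omega>) (U k \<omega>)) * indicator (?J -` Z \<inter> space (M \<Otimes>\<^sub>M lborel)) (\<omega>, y) \<partial>lborel)"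
        by (intro nn_integral_cong) (use w Z in \<open>auto simp: indicator_def space_pair_measure\<close>)
      finally show "indicator {\<omega> \<in> space M. hist X k \<omega> \<in> B} \<omega> *
              (\<integral>\<^sup>+ y. indicator A y * ennreal (q \<theta>s y (X k \<omega>) (U k \<omega>)) \<partial>lborel) =
            (\<integral>\<^sup>+ y. ennreal (q \<theta>s y (X k \<omega>) (U k \<omega>)) * indicator (?J -` Z \<inter> space (M \<Otimes>\<^sub>M lborel)) (\<omega>, y) \<partial>lborel)" .
    qed
    also have "\<dots> = (\<integral>\<^sup>+ z. (\<lambda>(\<omega>, y). ennreal (q \<theta>s y (X k \<omega>) (U k \<omega>))) z * indicator (?J -` Z \<inter> space (M \<Otimes>\<^sub>M lborel)) z \<partial>(M \<Otimes>\<^sub>M lborel))"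
      by (subst lborel.nn_integral_fst[symmetric])
         (use qs_meas measurable_sets[OF Jm ZS] in \<open>auto simp: case_prod_beta\<close>)
    also have "\<dots> = emeasure ?D (?J -` Z \<inter> space (M \<Otimes>\<^sub>M lborel))"
      by (rule emeasure_density[symmetric]) (use qs_meas measurable_sets[OF Jm ZS] in auto)
    also have "\<dots> = emeasure (distr ?D (P k \<Otimes>\<^sub>M borel) ?J) Z"
      by (subst emeasure_distr[OF Jm' ZS]) simp
    finally show "emeasure (distr M (P k \<Otimes>\<^sub>M borel) ?H) Z = emeasure (distr ?D (P k \<Otimes>\<^sub>M borel) ?J) Z" .
  qed
  have "(\<integral>\<^sup>+ \<omega>. G (hist X k \<omega>, X (Suc k) \<omega>) \<partial>M) = (\<integral>\<^sup>+ z. G z \<partial>distr M (P k \<Otimes>\<^sub>M borel) ?H)"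
    by (rule nn_integral_distr[symmetric, OF Hm]) (use G in simp)
  also have "\<dots> = (\<integral>\<^sup>+ z. G z \<partial>distr ?D (P k \<Otimes>\<^sub>M borel) ?J)" by (simp only: eq)
  also have "\<dots> = (\<integral>\<^sup>+ z. G (?J z) \<partial>?D)"
    by (rule nn_integral_distr[OF Jm']) (use G in simp)
  also have "\<dots> = (\<integral>\<^sup>+ z. (\<lambda>(\<omega>, y). ennreal (q \<theta>s y (X k \<omega>) (U k \<omega>))) z * G (?J z) \<partial>(M \<Otimes>\<^sub>M lborel))"
    by (rule nn_integral_density) (use qs_meas measurable_comp[OF Jm G] in \<open>auto simp: comp_def\<close>)
  also have "\<dots> = (\<integral>\<^sup>+ \<omega>. \<integral>\<^sup>+ y. ennreal (q \<theta>s y (X k \<omega>) (U k \<omega>)) * G (hist X k \<omega>, y) \<partial>lborel \<partial>M)"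
    by (subst lborel.nn_integral_fst[symmetric])
       (use qs_meas measurable_comp[OF Jm G] in \<open>auto simp: case_prod_beta comp_def\<close>)
  finally show ?thesis by (simp add: mult.commute)
qed

end



context model begin

lemma q_comp:
  assumes th: "th \<in> \<Theta>"
    and F: "(\<lambda>z. (Y z, Xx z, Uu z)) \<in> measurable K (borel \<Otimes>\<^sub>M borel \<Otimes>\<^sub>M N)"
  shows "(\<lambda>z. q th (Y z) (Xx z) (Uu z)) \<in> borel_measurable K"
  using measurable_comp[OF F q_meas[OF th]] by (simp add: comp_def)

lemma mix_meas:
  assumes g: "\<And>h. goodp (pf h)"
    and pm: "\<And>th. th \<in> \<Theta> \<Longrightarrow> (\<lambda>h. pf h th) \<in> borel_measurable K"
    and F: "(\<lambda>z. (Y z, Xx z, Uu z)) \<in> measurable K (borel \<Otimes>\<^sub>M borel \<Otimes>\<^sub>M N)"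
  shows "(\<lambda>h. mix (pf h) (Y h) (Xx h) (Uu h)) \<in> borel_measurable K"
proof (rule borel_measurable_LIMSEQ_real)
  let ?e = "from_nat_into \<Theta>"
  have b: "bij_betw ?e UNIV \<Theta>" using bij_betw_from_nat_into[OF cnt inf] .
  have en: "?e n \<in> \<Theta>" for n using b by (simp add: bij_betwE)
  fix h
  have "((\<lambda>th. pf h th * q th (Y h) (Xx h) (Uu h)) has_sum mix (pf h) (Y h) (Xx h) (Uu h)) \<Theta>"
    unfolding mix_def using mix_summable[OF g] by simp
  hence "((\<lambda>n. pf h (?e n) * q (?e n) (Y h) (Xx h) (Uu h)) has_sum mix (pf h) (Y h) (Xx h) (Uu h)) UNIV"
    using has_sum_reindex_bij_betw[OF b, of "\<lambda>th. pf h th * q th (Y h) (Xx h) (Uu h)"] by simp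
  hence "(\<lambda>n. pf h (?e n) * q (?e n) (Y h) (Xx h) (Uu h)) sums mix (pf h) (Y h) (Xx h) (Uu h)"
    by (rule has_sum_imp_sums)
  thus "(\<lambda>i. \<Sum>n<i. pf h (?e n) * q (?e n) (Y h) (Xx h) (Uu h)) \<longlonglongrightarrow> mix (pf h) (Y h) (Xx h) (Uu h)"
    by (simp add: sums_def)
next
  let ?e = "from_nat_into \<Theta>"
  have b: "bij_betw ?e UNIV \<Theta>" using bij_betw_from_nat_into[OF cnt inf] .
  have en: "?e n \<in> \<Theta>" for n using b by (simp add: bij_betwE)
  fix i
  show "(\<lambda>h. \<Sum>n<i. pf h (?e n) * q (?e n) (Y h) (Xx h) (Uu h)) \<in> borel_measurable K"
    using pm[OF en] q_comp[OF en F] by measurable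
qed

definition usH :: "(nat \<Rightarrow> 'x) \<Rightarrow> nat \<Rightarrow> 'u" where
  "usH h = (\<lambda>i. pol i (restrict h {..i}))"

definition postH :: "nat \<Rightarrow> (nat \<Rightarrow> 'x) \<Rightarrow> 'p \<Rightarrow> real" where
  "postH n h = posterior q \<Theta> \<pi>0 h (usH h) n"

lemma usH_meas: "i \<le> k \<Longrightarrow> (\<lambda>h. usH h i) \<in> measurable (P k) N"
  unfolding usH_def
  using measurable_comp[OF measurable_restrict_subset[of "{..i}" "{..k}"] pol_meas[of i]]
  by (simp add: comp_def)

lemma comp_meas: "i \<le> k \<Longrightarrow> (\<lambda>h. h i) \<in> borel_measurable (P k)"
  by (rule measurable_component_singleton) simp

lemma postH_meas: "n \<le> k \<Longrightarrow> th \<in> \<Theta> \<Longrightarrow> (\<lambda>h. postH n h th) \<in> borel_measurable (P k)"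
proof (induction n arbitrary: th)
  case 0 thus ?case by (simp add: postH_def)
next
  case (Suc n)
  have IH: "\<And>th. th \<in> \<Theta> \<Longrightarrow> (\<lambda>h. postH n h th) \<in> borel_measurable (P k)"
    using Suc by simp
  have F: "(\<lambda>h. (h (Suc n), h n, usH h n)) \<in> measurable (P k) (borel \<Otimes>\<^sub>M borel \<Otimes>\<^sub>M N)"
    by (intro measurable_Pair comp_meas usH_meas) (use Suc.prems in auto)
  have m1: "(\<lambda>h. q th (h (Suc n)) (h n) (usH h n)) \<in> borel_measurable (P k)"
    by (rule q_comp[OF Suc.prems(2) F])
  have m2: "(\<lambda>h. mix (postH n h) (h (Suc n)) (h n) (usH h n)) \<in> borel_measurable (P k)"
    by (rule mix_meas[OF _ IH F]) (simp add: postH_def post_good)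
  have eq: "postH (Suc n) h th = q th (h (Suc n)) (h n) (usH h n) * postH n h th / mix (postH n h) (h (Suc n)) (h n) (usH h n)" for h
    unfolding postH_def by (rule post_Suc)
  show ?case unfolding eq using m1 m2 IH[OF Suc.prems(2)] by measurable
qed

lemma lip_meas:
  fixes f :: "'x \<Rightarrow> real"
  assumes "\<And>y z. \<bar>f y - f z\<bar> \<le> L * dist y z"
  shows "f \<in> borel_measurable borel"
proof -
  have "continuous_on UNIV f"
  proof (rule continuous_on_iff[THEN iffD2], intro ballI allI impI)
    fix y and e :: real assume "0 < e"
    show "\<exists>d>0. \<forall>z\<in>UNIV. dist z y < d \<longrightarrow> dist (f z) (f y) < e"
    proof (intro exI[of _ "e / L"] conjI ballI impI)
      show "e / L > 0" using \<open>0 < e\<close> Lpos by simp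
      fix z assume "dist z y < e / L"
      hence "L * dist z y < e" using Lpos by (simp add: field_simps)
      thus "dist (f z) (f y) < e" using assms[of z y] by (simp add: dist_real_def)
    qed
  qed
  thus ?thesis by (rule borel_measurable_continuous_onI)
qed

lemma hist_post:
  assumes w: "\<omega> \<in> space M"
  shows "posterior q \<Theta> \<pi>0 (\<lambda>i. X i \<omega>) (\<lambda>i. U i \<omega>) n = postH n (hist X n \<omega>)"
    "U n \<omega> = usH (hist X n \<omega>) n" "X n \<omega> = hist X n \<omega> n"
proof -
  have u: "U i \<omega> = usH (hist X n \<omega>) i" if "i \<le> n" for i
    using that U_def[OF w, of i] unfolding usH_def hist_def
    by (simp add: Int_absorb2 subset_eq)
  show "posterior q \<Theta> \<pi>0 (\<lambda>i. X i \<omega>) (\<lambda>i. U i \<omega>) n = postH n (hist X n \<omega>)"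
    unfolding postH_def by (rule post_cong) (auto simp: hist_def u)
  show "U n \<omega> = usH (hist X n \<omega>) n" using u by simp
  show "X n \<omega> = hist X n \<omega> n" by (simp add: hist_def)
qed

end



lemma hell_gen:
  fixes a b :: "'x::euclidean_space \<Rightarrow> real"
  assumes am[measurable]: "a \<in> borel_measurable borel" and bm[measurable]: "b \<in> borel_measurable borel"
    and a0: "\<And>y. 0 \<le> a y" and b0: "\<And>y. 0 \<le> b y"
    and ai: "(\<integral>\<^sup>+ y. ennreal (a y) \<partial>lborel) = 1" and bi: "(\<integral>\<^sup>+ y. ennreal (b y) \<partial>lborel) = 1"
  shows "2 * (\<integral>\<^sup>+ y. ennreal (sqrt (a y * b y)) \<partial>lborel)
         + (\<integral>\<^sup>+ y. ennreal ((sqrt (a y) - sqrt (b y))\<^sup>2) \<partial>lborel) = 2"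
proof -
  have pt: "ennreal (2 * sqrt (a y * b y)) + ennreal ((sqrt (a y) - sqrt (b y))\<^sup>2) = ennreal (a y) + ennreal (b y)" for y
  proof -
    have "2 * sqrt (a y * b y) + (sqrt (a y) - sqrt (b y))\<^sup>2 = a y + b y"
      using a0[of y] b0[of y] by (simp add: power2_eq_square algebra_simps real_sqrt_mult)
    thus ?thesis using a0[of y] b0[of y] by (simp flip: ennreal_plus)
  qed
  have e2: "ennreal (2 * sqrt (a y * b y)) = 2 * ennreal (sqrt (a y * b y))" for y
    using a0[of y] b0[of y] by (subst ennreal_mult) auto
  have "2 * (\<integral>\<^sup>+ y. ennreal (sqrt (a y * b y)) \<partial>lborel) = (\<integral>\<^sup>+ y. 2 * ennreal (sqrt (a y * b y)) \<partial>lborel)"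
    by (rule nn_integral_cmult[symmetric]) measurable
  also have "\<dots> = (\<integral>\<^sup>+ y. ennreal (2 * sqrt (a y * b y)) \<partial>lborel)"
    by (simp only: e2)
  finally have "2 * (\<integral>\<^sup>+ y. ennreal (sqrt (a y * b y)) \<partial>lborel) = (\<integral>\<^sup>+ y. ennreal (2 * sqrt (a y * b y)) \<partial>lborel)" .
  also have "\<dots> + (\<integral>\<^sup>+ y. ennreal ((sqrt (a y) - sqrt (b y))\<^sup>2) \<partial>lborel)
      = (\<integral>\<^sup>+ y. ennreal (2 * sqrt (a y * b y)) + ennreal ((sqrt (a y) - sqrt (b y))\<^sup>2) \<partial>lborel)"
    by (rule nn_integral_add[symmetric]) measurable
  also have "\<dots> = (\<integral>\<^sup>+ y. ennreal (a y) + ennreal (b y) \<partial>lborel)" by (simp only: pt)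
  also have "\<dots> = (\<integral>\<^sup>+ y. ennreal (a y) \<partial>lborel) + (\<integral>\<^sup>+ y. ennreal (b y) \<partial>lborel)"
    by (rule nn_integral_add) measurable
  also have "\<dots> = 2" using ai bi by simp
  finally show ?thesis .
qed

context model begin

lemma mix_meas_y: "goodp p \<Longrightarrow> (\<lambda>y. mix p y x u) \<in> borel_measurable borel"
proof -
  assume p: "goodp p"
  have "\<bar>mix p y x u - mix p z x u\<bar> \<le> L * dist y z" for y z by (rule mix_lip[OF p])
  thus ?thesis by (rule lip_meas)
qed

lemma hellinger:
  assumes p: "goodp p"
  shows "2 * (\<integral>\<^sup>+ y. ennreal (sqrt (mix p y x u * q \<theta>s y x u)) \<partial>lborel)
         + (\<integral>\<^sup>+ y. ennreal ((sqrt (mix p y x u) - sqrt (q \<theta>s y x u))\<^sup>2) \<partial>lborel) = 2"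
  by (rule hell_gen[OF mix_meas_y[OF p] q_meas_y[OF ts] mix_nonneg[OF p] less_imp_le[OF qpos[OF ts]] mix_int[OF p] qint[OF ts]])

end



context model begin

definition "pw n \<omega> = posterior q \<Theta> \<pi>0 (\<lambda>i. X i \<omega>) (\<lambda>i. U i \<omega>) n"
definition "Qw n \<omega> y = mix (pw n \<omega>) y (X n \<omega>) (U n \<omega>)"
definition "Sw n \<omega> y = q \<theta>s y (X n \<omega>) (U n \<omega>)"
definition "Vw n \<omega> = ennreal (1 / sqrt (pw n \<omega> \<theta>s))"
definition "Dw n \<omega> = (\<integral>\<^sup>+ y. ennreal ((sqrt (Qw n \<omega> y) - sqrt (Sw n \<omega> y))\<^sup>2) \<partial>lborel)"
definition "BCw n \<omega> = (\<integral>\<^sup>+ y. ennreal (sqrt (Qw n \<omega> y * Sw n \<omega> y)) \<partial>lborel)"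

definition "QH n z = mix (postH n (fst z)) (snd z) (fst z n) (usH (fst z) n)"
definition "SH n z = q \<theta>s (snd z) (fst z n) (usH (fst z) n)"
definition "VH n h = ennreal (1 / sqrt (postH n h \<theta>s))"

lemma pw_good: "goodp (pw n \<omega>)" unfolding pw_def by (rule post_good)

lemma F_meas: "(\<lambda>z. (snd z, fst z n, usH (fst z) n)) \<in> measurable (P n \<Otimes>\<^sub>M borel) (borel \<Otimes>\<^sub>M borel \<Otimes>\<^sub>M N)"
proof (intro measurable_Pair)
  show "snd \<in> measurable (P n \<Otimes>\<^sub>M borel) borel" by (rule measurable_snd)
  show "(\<lambda>z. fst z n) \<in> borel_measurable (P n \<Otimes>\<^sub>M borel)"
    using measurable_compose[OF measurable_fst comp_meas[of n n]] by simp
  show "(\<lambda>z. usH (fst z) n) \<in> measurable (P n \<Otimes>\<^sub>M borel) N"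
    using measurable_compose[OF measurable_fst usH_meas[of n n]] by simp
qed

lemma QH_meas[measurable]: "QH n \<in> borel_measurable (P n \<Otimes>\<^sub>M borel)"
proof -
  have "(\<lambda>z. mix (postH n (fst z)) (snd z) (fst z n) (usH (fst z) n)) \<in> borel_measurable (P n \<Otimes>\<^sub>M borel)"
  proof (rule mix_meas[OF _ _ F_meas])
    show "goodp (postH n (fst z))" for z unfolding postH_def by (rule post_good)
    fix th assume "th \<in> \<Theta>"
    thus "(\<lambda>z. postH n (fst z) th) \<in> borel_measurable (P n \<Otimes>\<^sub>M borel)"
      using measurable_compose[OF measurable_fst postH_meas[of n n th]] by simp
  qed
  thus ?thesis unfolding QH_def[abs_def] .
qed

lemma SH_meas[measurable]: "SH n \<in> borel_measurable (P n \<Otimes>\<^sub>M borel)"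
  unfolding SH_def[abs_def] by (rule q_comp[OF ts F_meas])

lemma VH_meas[measurable]: "VH n \<in> borel_measurable (P n)"
proof -
  have "(\<lambda>h. postH n h \<theta>s) \<in> borel_measurable (P n)" by (rule postH_meas[OF _ ts]) simp
  thus ?thesis unfolding VH_def[abs_def] by measurable
qed

lemma H_eq:
  assumes w: "\<omega> \<in> space M"
  shows "QH n (hist X n \<omega>, y) = Qw n \<omega> y" "SH n (hist X n \<omega>, y) = Sw n \<omega> y" "VH n (hist X n \<omega>) = Vw n \<omega>"
  using hist_post[OF w, of n]
  by (simp_all add: QH_def SH_def VH_def Qw_def Sw_def Vw_def pw_def)

lemma Qw_meas[measurable]: "Qw n \<omega> \<in> borel_measurable borel"
  unfolding Qw_def[abs_def] by (rule mix_meas_y[OF pw_good])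

lemma Sw_meas[measurable]: "Sw n \<omega> \<in> borel_measurable borel"
  unfolding Sw_def[abs_def] by (rule q_meas_y[OF ts])

lemma Sw_pos: "Sw n \<omega> y > 0" unfolding Sw_def by (rule qpos[OF ts])
lemma Qw_pos: "Qw n \<omega> y > 0" unfolding Qw_def by (rule mix_bounds(3)[OF pw_good])

lemma Vw_Suc:
  "Vw (Suc n) \<omega> = Vw n \<omega> * ennreal (sqrt (Qw n \<omega> (X (Suc n) \<omega>) / Sw n \<omega> (X (Suc n) \<omega>)))"
proof -
  let ?Q = "Qw n \<omega> (X (Suc n) \<omega>)" and ?S = "Sw n \<omega> (X (Suc n) \<omega>)" and ?p = "pw n \<omega> \<theta>s"
  have Q: "?Q > 0" by (rule Qw_pos) have S: "?S > 0" by (rule Sw_pos)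
  have p: "?p > 0" using pw_good unfolding goodp_def by blast
  have e: "pw (Suc n) \<omega> \<theta>s = ?S * ?p / ?Q"
    unfolding pw_def Sw_def Qw_def by (subst post_Suc) simp
  have "1 / sqrt (pw (Suc n) \<omega> \<theta>s) = (1 / sqrt ?p) * sqrt (?Q / ?S)"
    unfolding e using Q S p by (simp add: real_sqrt_divide real_sqrt_mult)
  moreover have "ennreal ((1 / sqrt ?p) * sqrt (?Q / ?S)) = ennreal (1 / sqrt ?p) * ennreal (sqrt (?Q / ?S))"
    by (rule ennreal_mult) (use p Q S in auto)
  ultimately show ?thesis unfolding Vw_def by simp
qed

lemma step_eq: "(\<integral>\<^sup>+ \<omega>. Vw (Suc n) \<omega> \<partial>M) = (\<integral>\<^sup>+ \<omega>. Vw n \<omega> * BCw n \<omega> \<partial>M)"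
proof -
  define G where "G z = VH n (fst z) * ennreal (sqrt (QH n z / SH n z))" for z
  have Gm: "G \<in> borel_measurable (P n \<Otimes>\<^sub>M borel)"
    unfolding G_def[abs_def] by measurable
  have "(\<integral>\<^sup>+ \<omega>. Vw (Suc n) \<omega> \<partial>M) = (\<integral>\<^sup>+ \<omega>. G (hist X n \<omega>, X (Suc n) \<omega>) \<partial>M)"
    by (intro nn_integral_cong) (simp add: G_def H_eq Vw_Suc)
  also have "\<dots> = (\<integral>\<^sup>+ \<omega>. \<integral>\<^sup>+ y. G (hist X n \<omega>, y) * ennreal (q \<theta>s y (X n \<omega>) (U n \<omega>)) \<partial>lborel \<partial>M)"
    by (rule trans_ext[OF Gm])
  also have "\<dots> = (\<integral>\<^sup>+ \<omega>. Vw n \<omega> * BCw n \<omega> \<partial>M)"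
  proof (rule nn_integral_cong)
    fix \<omega> assume w: "\<omega> \<in> space M"
    have "(\<integral>\<^sup>+ y. G (hist X n \<omega>, y) * ennreal (q \<theta>s y (X n \<omega>) (U n \<omega>)) \<partial>lborel)
        = (\<integral>\<^sup>+ y. Vw n \<omega> * ennreal (sqrt (Qw n \<omega> y * Sw n \<omega> y)) \<partial>lborel)"
    proof (rule nn_integral_cong)
      fix y
      have Q: "Qw n \<omega> y > 0" by (rule Qw_pos) have S: "Sw n \<omega> y > 0" by (rule Sw_pos)
      have "sqrt (Qw n \<omega> y / Sw n \<omega> y) * Sw n \<omega> y = sqrt (Qw n \<omega> y * Sw n \<omega> y)"
        using Q S by (simp add: real_sqrt_divide real_sqrt_mult field_simps)
      hence "ennreal (sqrt (Qw n \<omega> y / Sw n \<omega> y)) * ennreal (Sw n \<omega> y) = ennreal (sqrt (Qw n \<omega> y * Sw n \<omega> y))"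
        using Q S by (simp flip: ennreal_mult)
      thus "G (hist X n \<omega>, y) * ennreal (q \<theta>s y (X n \<omega>) (U n \<omega>)) = Vw n \<omega> * ennreal (sqrt (Qw n \<omega> y * Sw n \<omega> y))"
        unfolding G_def using H_eq[OF w] by (simp add: Sw_def[symmetric] mult.assoc)
    qed
    also have "\<dots> = Vw n \<omega> * BCw n \<omega>"
      unfolding BCw_def by (rule nn_integral_cmult) measurable
    finally show "(\<integral>\<^sup>+ y. G (hist X n \<omega>, y) * ennreal (q \<theta>s y (X n \<omega>) (U n \<omega>)) \<partial>lborel) = Vw n \<omega> * BCw n \<omega>" .
  qed
  finally show ?thesis .
qed

end



context model begin

lemma int_meas:
  assumes F: "Fn \<in> borel_measurable (P n \<Otimes>\<^sub>M borel)"
  shows "(\<lambda>\<omega>. \<integral>\<^sup>+ y. Fn (hist X n \<omega>, y) \<partial>lborel) \<in> borel_measurable M"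
proof -
  have F': "Fn \<in> borel_measurable (P n \<Otimes>\<^sub>M lborel)"
    using F by (subst measurable_cong_sets[OF sets_pair_measure_cong[OF refl sets_lborel] refl])
  have "(\<lambda>h. \<integral>\<^sup>+ y. Fn (h, y) \<partial>lborel) \<in> borel_measurable (P n)"
    by (rule lborel.borel_measurable_nn_integral_fst[OF F'])
  from measurable_compose[OF hist_meas this] show ?thesis by simp
qed

lemma Vw_measM[measurable]: "Vw n \<in> borel_measurable M"
proof -
  have "(\<lambda>\<omega>. VH n (hist X n \<omega>)) \<in> borel_measurable M"
    using measurable_compose[OF hist_meas VH_meas] by simp
  thus ?thesis by (rule measurable_cong[THEN iffD1, rotated]) (simp add: H_eq)
qed

lemma BCw_measM[measurable]: "BCw n \<in> borel_measurable M"
proof -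
  have m: "(\<lambda>z. ennreal (sqrt (QH n z * SH n z))) \<in> borel_measurable (P n \<Otimes>\<^sub>M borel)" by measurable
  have "(\<lambda>\<omega>. \<integral>\<^sup>+ y. ennreal (sqrt (QH n (hist X n \<omega>, y) * SH n (hist X n \<omega>, y))) \<partial>lborel) \<in> borel_measurable M"
    using int_meas[OF m] by simp
  thus ?thesis by (rule measurable_cong[THEN iffD1, rotated]) (simp add: H_eq BCw_def)
qed

lemma Dw_measM[measurable]: "Dw n \<in> borel_measurable M"
proof -
  have m: "(\<lambda>z. ennreal ((sqrt (QH n z) - sqrt (SH n z))\<^sup>2)) \<in> borel_measurable (P n \<Otimes>\<^sub>M borel)" by measurable
  have "(\<lambda>\<omega>. \<integral>\<^sup>+ y. ennreal ((sqrt (QH n (hist X n \<omega>, y)) - sqrt (SH n (hist X n \<omega>, y)))\<^sup>2) \<partial>lborel) \<in> borel_measurable M"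
    using int_meas[OF m] by simp
  thus ?thesis by (rule measurable_cong[THEN iffD1, rotated]) (simp add: H_eq Dw_def)
qed

lemma Vw_ge1: "1 \<le> Vw n \<omega>"
proof -
  have p: "pw n \<omega> \<theta>s > 0" "pw n \<omega> \<theta>s \<le> 1"
    using pw_good post_le1[OF pw_good ts] unfolding goodp_def by auto
  hence "sqrt (pw n \<omega> \<theta>s) \<le> 1" by simp
  hence "1 \<le> 1 / sqrt (pw n \<omega> \<theta>s)" using p by (simp add: field_simps)
  thus ?thesis unfolding Vw_def by (simp add: ennreal_ge_1)
qed

lemma hell_w: "2 * BCw n \<omega> + Dw n \<omega> = 2"
  unfolding BCw_def Dw_def Qw_def Sw_def by (rule hellinger[OF pw_good])

lemma ineq: "2 * (\<integral>\<^sup>+ \<omega>. Vw (Suc n) \<omega> \<partial>M) + (\<integral>\<^sup>+ \<omega>. Dw n \<omega> \<partial>M) \<le> 2 * (\<integral>\<^sup>+ \<omega>. Vw n \<omega> \<partial>M)"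
proof -
  have "2 * (\<integral>\<^sup>+ \<omega>. Vw (Suc n) \<omega> \<partial>M) + (\<integral>\<^sup>+ \<omega>. Dw n \<omega> \<partial>M)
      = 2 * (\<integral>\<^sup>+ \<omega>. Vw n \<omega> * BCw n \<omega> \<partial>M) + (\<integral>\<^sup>+ \<omega>. Dw n \<omega> \<partial>M)" by (simp only: step_eq)
  also have "\<dots> \<le> 2 * (\<integral>\<^sup>+ \<omega>. Vw n \<omega> * BCw n \<omega> \<partial>M) + (\<integral>\<^sup>+ \<omega>. Vw n \<omega> * Dw n \<omega> \<partial>M)"
  proof (rule add_left_mono, rule nn_integral_mono)
    fix \<omega>
    have "1 * Dw n \<omega> \<le> Vw n \<omega> * Dw n \<omega>" by (rule mult_right_mono[OF Vw_ge1]) simp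
    thus "Dw n \<omega> \<le> Vw n \<omega> * Dw n \<omega>" by simp
  qed
  also have "\<dots> = (\<integral>\<^sup>+ \<omega>. 2 * (Vw n \<omega> * BCw n \<omega>) \<partial>M) + (\<integral>\<^sup>+ \<omega>. Vw n \<omega> * Dw n \<omega> \<partial>M)"
    by (subst nn_integral_cmult) measurable
  also have "\<dots> = (\<integral>\<^sup>+ \<omega>. 2 * (Vw n \<omega> * BCw n \<omega>) + Vw n \<omega> * Dw n \<omega> \<partial>M)"
    by (rule nn_integral_add[symmetric]) measurable
  also have "\<dots> = (\<integral>\<^sup>+ \<omega>. 2 * Vw n \<omega> \<partial>M)"
  proof (rule nn_integral_cong)
    fix \<omega>
    have "2 * (Vw n \<omega> * BCw n \<omega>) + Vw n \<omega> * Dw n \<omega> = Vw n \<omega> * (2 * BCw n \<omega> + Dw n \<omega>)"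
      by (simp add: algebra_simps)
    thus "2 * (Vw n \<omega> * BCw n \<omega>) + Vw n \<omega> * Dw n \<omega> = 2 * Vw n \<omega>" by (simp add: hell_w mult.commute)
  qed
  also have "\<dots> = 2 * (\<integral>\<^sup>+ \<omega>. Vw n \<omega> \<partial>M)"
    by (rule nn_integral_cmult) measurable
  finally show ?thesis .
qed

lemma Vw0: "(\<integral>\<^sup>+ \<omega>. Vw 0 \<omega> \<partial>M) = ennreal (1 / sqrt (\<pi>0 \<theta>s))"
proof -
  interpret prob_space M by (rule M)
  have "(\<integral>\<^sup>+ \<omega>. Vw 0 \<omega> \<partial>M) = (\<integral>\<^sup>+ \<omega>. ennreal (1 / sqrt (\<pi>0 \<theta>s)) \<partial>M)"
    by (simp add: Vw_def pw_def)
  also have "\<dots> = ennreal (1 / sqrt (\<pi>0 \<theta>s))" by (simp add: emeasure_space_1)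
  finally show ?thesis .
qed

lemma tele: "2 * (\<integral>\<^sup>+ \<omega>. Vw n \<omega> \<partial>M) + (\<Sum>i<n. \<integral>\<^sup>+ \<omega>. Dw i \<omega> \<partial>M) \<le> 2 * ennreal (1 / sqrt (\<pi>0 \<theta>s))"
proof (induction n)
  case 0 thus ?case by (simp add: Vw0)
next
  case (Suc n)
  have "2 * (\<integral>\<^sup>+ \<omega>. Vw (Suc n) \<omega> \<partial>M) + (\<Sum>i<Suc n. \<integral>\<^sup>+ \<omega>. Dw i \<omega> \<partial>M)
     = (2 * (\<integral>\<^sup>+ \<omega>. Vw (Suc n) \<omega> \<partial>M) + (\<integral>\<^sup>+ \<omega>. Dw n \<omega> \<partial>M)) + (\<Sum>i<n. \<integral>\<^sup>+ \<omega>. Dw i \<omega> \<partial>M)"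
    by (simp add: algebra_simps)
  also have "\<dots> \<le> 2 * (\<integral>\<^sup>+ \<omega>. Vw n \<omega> \<partial>M) + (\<Sum>i<n. \<integral>\<^sup>+ \<omega>. Dw i \<omega> \<partial>M)"
    by (rule add_right_mono[OF ineq])
  also have "\<dots> \<le> 2 * ennreal (1 / sqrt (\<pi>0 \<theta>s))" by (rule Suc.IH)
  finally show ?case .
qed

lemma AE_sum: "AE \<omega> in M. (\<Sum>i. Dw i \<omega>) \<noteq> \<infinity>"
proof (rule nn_integral_PInf_AE)
  show "(\<lambda>\<omega>. \<Sum>i. Dw i \<omega>) \<in> borel_measurable M" by measurable
  have "(\<integral>\<^sup>+ \<omega>. (\<Sum>i. Dw i \<omega>) \<partial>M) = (\<Sum>i. \<integral>\<^sup>+ \<omega>. Dw i \<omega> \<partial>M)"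
    by (rule nn_integral_suminf) measurable
  also have "\<dots> \<le> 2 * ennreal (1 / sqrt (\<pi>0 \<theta>s))"
  proof (rule suminf_le_const)
    fix n
    have "(\<Sum>i<n. \<integral>\<^sup>+ \<omega>. Dw i \<omega> \<partial>M) \<le> 2 * (\<integral>\<^sup>+ \<omega>. Vw n \<omega> \<partial>M) + (\<Sum>i<n. \<integral>\<^sup>+ \<omega>. Dw i \<omega> \<partial>M)"
      by simp
    also have "\<dots> \<le> 2 * ennreal (1 / sqrt (\<pi>0 \<theta>s))" by (rule tele)
    finally show "(\<Sum>i<n. \<integral>\<^sup>+ \<omega>. Dw i \<omega> \<partial>M) \<le> 2 * ennreal (1 / sqrt (\<pi>0 \<theta>s))" .
  qed simp
  also have "\<dots> < \<infinity>" by (simp add: ennreal_mult_less_top)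
  finally show "(\<integral>\<^sup>+ \<omega>. (\<Sum>i. Dw i \<omega>) \<partial>M) \<noteq> \<infinity>" by simp
qed

end



context model begin

lemma Qw_bounds: "0 \<le> Qw n \<omega> y" "Qw n \<omega> y \<le> C" "\<bar>Qw n \<omega> y - Qw n \<omega> z\<bar> \<le> L * dist y z"
  unfolding Qw_def using mix_nonneg[OF pw_good] mix_bounds(2)[OF pw_good] mix_lip[OF pw_good] by auto

lemma Sw_bounds: "0 \<le> Sw n \<omega> y" "Sw n \<omega> y \<le> C" "\<bar>Sw n \<omega> y - Sw n \<omega> z\<bar> \<le> L * dist y z"
  unfolding Sw_def using qpos[OF ts] qbdd[OF ts] qlip[OF ts] by (auto simp: less_imp_le)

lemma unif:
  assumes fin: "(\<Sum>i. Dw i \<omega>) \<noteq> \<infinity>" and e: "e > 0"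
  shows "eventually (\<lambda>n. \<forall>y. \<bar>Qw n \<omega> y - Sw n \<omega> y\<bar> < e) sequentially"
proof -
  define d where "d = (e/2)\<^sup>2 / (4 * C) * measure lborel (ball (0::'x) (e / (4 * L)))"
  have dpos: "d > 0" unfolding d_def using e Cpos Lpos
    by (intro mult_pos_pos divide_pos_pos content_ball_pos) auto
  define g where "g i = enn2real (Dw i \<omega>)" for i
  have fi: "Dw i \<omega> < \<infinity>" for i
    using fin ennreal_suminf_lessD[of "\<lambda>i. Dw i \<omega>" \<infinity> i] by (simp add: top.not_eq_extremum)
  have Dg: "Dw i \<omega> = ennreal (g i)" for i unfolding g_def using fi[of i] by simp
  have "summable g"
  proof (rule summable_suminf_not_top)
    show "0 \<le> g i" for i unfolding g_def by simp
    have "(\<lambda>i. ennreal (g i)) = (\<lambda>i. Dw i \<omega>)" using Dg by simp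
    thus "(\<Sum>i. ennreal (g i)) \<noteq> top" using fin by simp
  qed
  hence "g \<longlonglongrightarrow> 0" by (rule summable_LIMSEQ_zero)
  hence ev: "eventually (\<lambda>n. g n < d) sequentially"
  proof -
    have "eventually (\<lambda>n. dist (g n) 0 < d) sequentially"
      using \<open>g \<longlonglongrightarrow> 0\<close> dpos by (simp only: tendsto_iff)
    moreover have "0 \<le> g n" for n unfolding g_def by simp
    ultimately show ?thesis by (auto elim!: eventually_mono simp: dist_real_def)
  qed
  show ?thesis
  proof (rule eventually_mono[OF ev], intro allI, rule ccontr)
    fix n y assume gn: "g n < d" and "\<not> \<bar>Qw n \<omega> y - Sw n \<omega> y\<bar> < e"
    hence ge: "\<bar>Qw n \<omega> y - Sw n \<omega> y\<bar> \<ge> e" by simp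
    have "ennreal d \<le> Dw n \<omega>"
      unfolding d_def Dw_def
      by (rule separation[OF Qw_bounds(1)[of n \<omega>] Qw_bounds(2)[of n \<omega>] Sw_bounds(1)[of n \<omega>]
          Sw_bounds(2)[of n \<omega>] Lpos Qw_bounds(3)[of n \<omega>] Sw_bounds(3)[of n \<omega>] e ge])
    hence "ennreal d \<le> ennreal (g n)" by (simp only: Dg)
    hence "d \<le> g n" using dpos by (simp add: ennreal_le_iff2)
    thus False using gn by simp
  qed
qed

lemma final_conv:
  "(AE \<omega> in M. \<forall>y.
            (\<lambda>k. \<bar>qhat q \<Theta> \<pi>0 (\<lambda>i. X i \<omega>) (\<lambda>i. U i \<omega>) k y (X (k - 1) \<omega>) (U (k - 1) \<omega>)
                  - q \<theta>s y (X (k - 1) \<omega>) (U (k - 1) \<omega>)\<bar>) \<longlonglongrightarrow> 0)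
       \<and> (AE \<omega> in M.
            (\<lambda>k. qhat q \<Theta> \<pi>0 (\<lambda>i. X i \<omega>) (\<lambda>i. U i \<omega>) k (X k \<omega>) (X (k - 1) \<omega>) (U (k - 1) \<omega>)
                  - q \<theta>s (X k \<omega>) (X (k - 1) \<omega>) (U (k - 1) \<omega>)) \<longlonglongrightarrow> 0)"
proof
  have qh: "qhat q \<Theta> \<pi>0 (\<lambda>i. X i \<omega>) (\<lambda>i. U i \<omega>) (Suc n) y (X n \<omega>) (U n \<omega>) = Qw n \<omega> y" for \<omega> n y
    by (simp add: qhat_mix Qw_def pw_def)
  show "AE \<omega> in M. \<forall>y.
            (\<lambda>k. \<bar>qhat q \<Theta> \<pi>0 (\<lambda>i. X i \<omega>) (\<lambda>i. U i \<omega>) k y (X (k - 1) \<omega>) (U (k - 1) \<omega>)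
                  - q \<theta>s y (X (k - 1) \<omega>) (U (k - 1) \<omega>)\<bar>) \<longlonglongrightarrow> 0"
    using AE_sum
  proof (rule AE_mp, intro AE_I2 impI allI)
    fix \<omega> y assume fin: "(\<Sum>i. Dw i \<omega>) \<noteq> \<infinity>"
    have "(\<lambda>n. \<bar>Qw n \<omega> y - Sw n \<omega> y\<bar>) \<longlonglongrightarrow> 0"
    proof (rule tendsto_iff[THEN iffD2], intro allI impI)
      fix e :: real assume e: "e > 0"
      show "eventually (\<lambda>n. dist \<bar>Qw n \<omega> y - Sw n \<omega> y\<bar> 0 < e) sequentially"
        using unif[OF fin e] by (rule eventually_mono) (simp add: dist_real_def)
    qed
    thus "(\<lambda>k. \<bar>qhat q \<Theta> \<pi>0 (\<lambda>i. X i \<omega>) (\<lambda>i. U i \<omega>) k y (X (k - 1) \<omega>) (U (k - 1) \<omega>)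
                  - q \<theta>s y (X (k - 1) \<omega>) (U (k - 1) \<omega>)\<bar>) \<longlonglongrightarrow> 0"
      by (subst filterlim_sequentially_Suc[symmetric]) (simp add: qh Sw_def)
  qed
  show "AE \<omega> in M.
            (\<lambda>k. qhat q \<Theta> \<pi>0 (\<lambda>i. X i \<omega>) (\<lambda>i. U i \<omega>) k (X k \<omega>) (X (k - 1) \<omega>) (U (k - 1) \<omega>)
                  - q \<theta>s (X k \<omega>) (X (k - 1) \<omega>) (U (k - 1) \<omega>)) \<longlonglongrightarrow> 0"
    using AE_sum
  proof (rule AE_mp, intro AE_I2 impI)
    fix \<omega> assume fin: "(\<Sum>i. Dw i \<omega>) \<noteq> \<infinity>"
    have "(\<lambda>n. Qw n \<omega> (X (Suc n) \<omega>) - Sw n \<omega> (X (Suc n) \<omega>)) \<longlonglongrightarrow> 0"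
    proof (rule tendsto_iff[THEN iffD2], intro allI impI)
      fix e :: real assume e: "e > 0"
      show "eventually (\<lambda>n. dist (Qw n \<omega> (X (Suc n) \<omega>) - Sw n \<omega> (X (Suc n) \<omega>)) 0 < e) sequentially"
        using unif[OF fin e] by (rule eventually_mono) (simp add: dist_real_def)
    qed
    thus "(\<lambda>k. qhat q \<Theta> \<pi>0 (\<lambda>i. X i \<omega>) (\<lambda>i. U i \<omega>) k (X k \<omega>) (X (k - 1) \<omega>) (U (k - 1) \<omega>)
                  - q \<theta>s (X k \<omega>) (X (k - 1) \<omega>) (U (k - 1) \<omega>)) \<longlonglongrightarrow> 0"
      by (subst filterlim_sequentially_Suc[symmetric]) (simp add: qh Sw_def)
  qed
qed

end

theorem mainTheorem5:
  fixes M :: "'a measure"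
    and N :: "'u measure"
    and X :: "nat \<Rightarrow> 'a \<Rightarrow> 'x::euclidean_space"
    and U :: "nat \<Rightarrow> 'a \<Rightarrow> 'u"
    and pol :: "nat \<Rightarrow> (nat \<Rightarrow> 'x) \<Rightarrow> 'u"
    and \<Theta> :: "'p set"
    and \<theta>s :: 'p
    and q :: "'p \<Rightarrow> 'x \<Rightarrow> 'x \<Rightarrow> 'u \<Rightarrow> real"
    and q' :: "'p \<Rightarrow> 'x \<Rightarrow> 'u \<Rightarrow> 'x \<Rightarrow> 'x \<Rightarrow>\<^sub>L real"
    and L :: real
    and \<pi>0 :: "'p \<Rightarrow> real"
  assumes M: "prob_space M"
    and Theta_countable: "countable \<Theta>" and Theta_infinite: "infinite \<Theta>"
    and true_param: "\<theta>s \<in> \<Theta>"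
    and X_meas: "\<And>k. X k \<in> borel_measurable M"
    and pol_meas: "\<And>k. pol k \<in> measurable (PiM {..k} (\<lambda>_. borel)) N"
    and U_def: "\<And>k \<omega>. \<omega> \<in> space M \<Longrightarrow> U k \<omega> = pol k (hist X k \<omega>)"
    and q_meas: "\<And>th. th \<in> \<Theta> \<Longrightarrow>
          (\<lambda>(y, x, u). q th y x u) \<in> borel_measurable (borel \<Otimes>\<^sub>M borel \<Otimes>\<^sub>M N)"
    and q_pos: "\<And>th y x u. th \<in> \<Theta> \<Longrightarrow> q th y x u > 0"
    and q_density: "\<And>th x u. th \<in> \<Theta> \<Longrightarrow> (\<integral>\<^sup>+ y. ennreal (q th y x u) \<partial>lborel) = 1"
    and q_deriv: "\<And>th x u y. th \<in> \<Theta> \<Longrightarrow>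
          ((\<lambda>y. q th y x u) has_derivative blinfun_apply (q' th x u y)) (at y)"
    and q_C1: "\<And>th x u. th \<in> \<Theta> \<Longrightarrow> continuous_on UNIV (q' th x u)"
    and q_deriv_bdd: "\<And>th x u y. th \<in> \<Theta> \<Longrightarrow> norm (q' th x u y) \<le> L"
    and transition: "\<And>k B A. B \<in> sets (PiM {..k} (\<lambda>_. borel)) \<Longrightarrow> A \<in> sets borel \<Longrightarrow>
          emeasure M {\<omega> \<in> space M. hist X k \<omega> \<in> B \<and> X (Suc k) \<omega> \<in> A} =
          (\<integral>\<^sup>+ \<omega>. indicator {\<omega> \<in> space M. hist X k \<omega> \<in> B} \<omega> *
              (\<integral>\<^sup>+ y. indicator A y * ennreal (q \<theta>s y (X k \<omega>) (U k \<omega>)) \<partial>lborel) \<partial>M)"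
    and prior_nonneg: "\<And>th. th \<in> \<Theta> \<Longrightarrow> \<pi>0 th \<ge> 0"
    and prior_sum: "(\<pi>0 has_sum 1) \<Theta>"
    and prior_true: "\<pi>0 \<theta>s > 0"
  shows "(AE \<omega> in M. \<forall>y.
            (\<lambda>k. \<bar>qhat q \<Theta> \<pi>0 (\<lambda>i. X i \<omega>) (\<lambda>i. U i \<omega>) k y (X (k - 1) \<omega>) (U (k - 1) \<omega>)
                  - q \<theta>s y (X (k - 1) \<omega>) (U (k - 1) \<omega>)\<bar>) \<longlonglongrightarrow> 0)
       \<and> (AE \<omega> in M.
            (\<lambda>k. qhat q \<Theta> \<pi>0 (\<lambda>i. X i \<omega>) (\<lambda>i. U i \<omega>) k (X k \<omega>) (X (k - 1) \<omega>) (U (k - 1) \<omega>)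
                  - q \<theta>s (X k \<omega>) (X (k - 1) \<omega>) (U (k - 1) \<omega>)) \<longlonglongrightarrow> 0)"
  proof -
  have L0: "0 \<le> L" using q_deriv_bdd[OF true_param] norm_ge_zero order_trans by blast
  have lip0: "\<bar>q th y x u - q th z x u\<bar> \<le> L * dist y z" if th: "th \<in> \<Theta>" for th y z x u
  proof -
    have "norm (q th y x u - q th z x u) \<le> L * norm (y - z)"
    proof (rule differentiable_bound[where S=UNIV and f="\<lambda>y. q th y x u" and f'="\<lambda>y. blinfun_apply (q' th x u y)"])
      show "convex (UNIV :: 'x set)" by simp
      show "((\<lambda>y. q th y x u) has_derivative blinfun_apply (q' th x u w)) (at w within UNIV)" for w
        using q_deriv[OF th] by simp
      show "onorm (blinfun_apply (q' th x u w)) \<le> L" for w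
        using q_deriv_bdd[OF th] by (simp add: norm_blinfun.rep_eq[symmetric])
    qed auto
    thus ?thesis by (simp add: dist_norm)
  qed
  have lip: "\<bar>q th y x u - q th z x u\<bar> \<le> (L + 1) * dist y z" if th: "th \<in> \<Theta>" for th y z x u
  proof -
    have "L * dist y z \<le> (L + 1) * dist y z" by (simp add: mult_right_mono)
    thus ?thesis using lip0[OF th, of y x u z] by linarith
  qed
  define C where "C = max (2 * (L + 1)) (2 / measure lborel (ball (0::'x) 1))"
  have qb: "q th y x u \<le> C" if th: "th \<in> \<Theta>" for th y x u
    unfolding C_def
    by (rule density_bound[of "\<lambda>y. q th y x u" "L + 1"])
       (use q_pos[OF th] L0 lip[OF th] q_density[OF th] in \<open>auto simp: less_imp_le\<close>)
  have Lp: "L + 1 > 0" using L0 by simp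
  have mdl: "model q \<Theta> \<pi>0 \<theta>s C (L + 1) M N X U pol"
    apply (rule model.intro)
    apply (rule bayes.intro)
    apply (fact Theta_countable)
    apply (fact Theta_infinite)
    apply (fact true_param)
    apply (fact q_pos)
    apply (fact qb)
    apply (fact Lp)
    apply (fact lip)
    apply (fact q_density)
    apply (fact prior_nonneg)
    apply (fact prior_sum)
    apply (fact prior_true)
    apply (rule model_axioms.intro)
    apply (fact M)
    apply (fact X_meas)
    apply (fact pol_meas)
    apply (fact U_def)
    apply (fact q_meas)
    apply (fact transition)
    done
  show ?thesis by (rule model.final_conv[OF mdl])
qed

end
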